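(* Let $\lambda_1,\lambda_2$ be as in the context. For any $(c,\theta)\in\Omega$ and any $B\in[\lambda_2^2,\lambda_1^2]$ we have $$c^2+2\cos\theta\,B-\frac{\sin^2\theta}{c^2}B^2>0.$$
   Context: Either $\lambda_1>\lambda_2>0$ or $\lambda_1=\lambda_2=1$. For $c>0$ put $\theta_c^+=\pi$ if $c>\sqrt2\lambda_1$ and $\theta_c^+=\arccos(1-c^2/\lambda_1^2)\in(0,\pi]$ if $0<c\le\sqrt2\lambda_1$. $\Omega=\{(c,\theta)\in\mathbb{R}^2: c>0,\ \theta\in(-\theta_c^+,\theta_c^+)\}$. *)

theory Defs
  imports "HOL-Analysis.Analysis"
begin

definition lambda_ok :: "real \<Rightarrow> real \<Rightarrow> bool" where
  "lambda_ok l1 l2 \<longleftrightarrow> (l1 > l2 \<and> l2 > 0) \<or> (l1 = 1 \<and> l2 = 1)"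

definition theta_plus :: "real \<Rightarrow> real \<Rightarrow> real" where
  "theta_plus l1 c = (if c > sqrt 2 * l1 then pi else arccos (1 - c^2 / l1^2))"

definition Omega :: "real \<Rightarrow> (real \<times> real) set" where
  "Omega l1 = {(c, \<theta>). c > 0 \<and> - theta_plus l1 c < \<theta> \<and> \<theta> < theta_plus l1 c}"

end

theory Submission
  imports Defs
begin

theorem lemma5p1:
  fixes l1 l2 c \<theta> B :: real
  assumes "lambda_ok l1 l2"
    and "(c, \<theta>) \<in> Omega l1"
    and "l2^2 \<le> B" and "B \<le> l1^2"
  shows "c^2 + 2 * cos \<theta> * B - (sin \<theta>)^2 / c^2 * B^2 > 0"
proof -
  have l2: "l2 > 0" and l1: "l1 > 0" using assms(1) unfolding lambda_ok_def by auto
  have c: "c > 0" and th: "\<bar>\<theta>\<bar> < theta_plus l1 c" using assms(2) unfolding Omega_def by auto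
  have B: "B > 0" using l2 assms(3) by (smt (verit) zero_less_power)
  have key: "B * (1 - cos \<theta>) < c^2"
  proof (cases "c > sqrt 2 * l1")
    case True
    have "(sqrt 2 * l1)^2 < c^2" using True l1 by (intro power_strict_mono) auto
    hence "2 * l1^2 < c^2" by (simp add: power_mult_distrib)
    moreover have "B * (1 - cos \<theta>) \<le> l1^2 * 2"
      using assms(4) B cos_ge_minus_one[of \<theta>] cos_le_one[of \<theta>]
      by (intro mult_mono) auto
    ultimately show ?thesis by simp
  next
    case False
    have sq: "c^2 \<le> 2 * l1^2"
    proof -
      have "c^2 \<le> (sqrt 2 * l1)^2" using False c by (intro power_mono) auto
      thus ?thesis by (simp add: power_mult_distrib)
    qed
    let ?a = "1 - c^2 / l1^2"
    have a1: "-1 \<le> ?a" using sq l1 by (simp add: field_simps)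
    have a2: "?a \<le> 1" using c l1 by simp
    have tp: "theta_plus l1 c = arccos ?a" using False unfolding theta_plus_def by simp
    have "cos (arccos ?a) < cos \<bar>\<theta>\<bar>"
      using th tp arccos_ubound[OF a1 a2]
      by (intro cos_monotone_0_pi) auto
    hence "?a < cos \<theta>" using a1 a2 by (simp add: cos_arccos)
    hence "1 - cos \<theta> < c^2 / l1^2" by simp
    hence "l1^2 * (1 - cos \<theta>) < c^2" using l1 by (simp add: field_simps)
    moreover have "B * (1 - cos \<theta>) \<le> l1^2 * (1 - cos \<theta>)"
      using assms(4) cos_le_one[of \<theta>] by (intro mult_right_mono) auto
    ultimately show ?thesis by simp
  qed
  have f1: "c^2 + B * (1 + cos \<theta>) > 0"
    using c B cos_ge_minus_one[of \<theta>] by (smt (verit) mult_nonneg_nonneg zero_less_power)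
  have f2: "c^2 - B * (1 - cos \<theta>) > 0" using key by simp
  have prod: "(c^2 + B * (1 + cos \<theta>)) * (c^2 - B * (1 - cos \<theta>)) > 0"
    using f1 f2 by simp
  have eq: "(c^2 + B * (1 + cos \<theta>)) * (c^2 - B * (1 - cos \<theta>))
      = c^2 * (c^2 + 2 * cos \<theta> * B - (sin \<theta>)^2 / c^2 * B^2)"
  proof -
    have s: "(sin \<theta>)^2 = 1 - (cos \<theta>)^2" by (simp add: sin_squared_eq)
    show ?thesis using c unfolding s by (simp add: field_simps power2_eq_square)
  qed
  have "c^2 * (c^2 + 2 * cos \<theta> * B - (sin \<theta>)^2 / c^2 * B^2) > 0"
    using prod eq by simp
  thus ?thesis using c by (simp add: zero_less_mult_iff)
qed

end
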